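(* Let $(\mathcal A,X,\alpha)$ be a PTS of type $\diamond\in\{0,*,\omega,\infty\}$ and let $\mathbf{tr}(x)$ denote the unique extension to $\sigma(\mathcal S_\diamond)$ of the trace pre-measure. Then for every $S\in\sigma(\mathcal S_\diamond)$ the function $X\to[0,1]$, $x\mapsto\mathbf{tr}(x)(S)$, is Borel measurable. Consequently $\mathbf{tr}:X\to T\mathcal A^\diamond$ (with $T=\mathbb S$ for $\diamond\in\{0,*\}$ and $T=\mathbb P$ for $\diamond\in\{\omega,\infty\}$, and $\mathcal A^0:=\emptyset$) is a measurable map, i.e. a Kleisli arrow of $T$.
   Context: $\mathcal A$ finite alphabet with $\sigma$-algebra $\mathcal P(\mathcal A)$; $\mathbf 1=\{\checkmark\}$. $\mathbb S(Y)$ / $\mathbb P(Y)$: sub-probability / probability measures on $\Sigma_Y$ with the smallest $\sigma$-algebra making evaluation maps $P\mapsto P(S)$ Borel measurable. A PTS of type $\diamond$ is $(\mathcal A,X,\alpha)$ with $\alpha$ a measurable map $X\to\mathbb S(\mathcal A\times X)$ ($0$), $X\to\mathbb S(\mathcal A\times X+\mathbf 1)$ ($*$), $X\to\mathbb P(\mathcal A\times X)$ ($\omega$), $X\to\mathbb P(\mathcal A\times X+\mathbf 1)$ ($\infty$); $\mathbf P_a(x,S)=\alpha(x)(\{a\}\times S)$. $C_\omega(u)=\{v\in\mathcal A^\omega:u\sqsubseteq v\}$, $C_\infty(u)=\{v\in\mathcal A^\infty:u\sqsubseteq v\}$ ($\mathcal A^\infty=\mathcal A^*\cup\mathcal A^\omega$).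 $\mathcal S_0=\{\emptyset\}$, $\mathcal S_*=\{\emptyset\}\cup\{\{u\}:u\in\mathcal A^*\}$, $\mathcal S_\omega=\{\emptyset\}\cup\{C_\omega(u)\}$, $\mathcal S_\infty=\{\emptyset\}\cup\{\{u\}\}\cup\{C_\infty(u)\}$ ($u\in\mathcal A^*$). Trace pre-measure: $\mathbf{tr}(x)(\emptyset)=0$; for $\diamond\in\{*,\infty\}$: $\mathbf{tr}(x)(\{\epsilon\})=\alpha(x)(\mathbf 1)$, $\mathbf{tr}(x)(\{au\})=\int\mathbf{tr}(x')(\{u\})\,d\mathbf P_a(x,x')$; for $\diamond\in\{\omega,\infty\}$: $\mathbf{tr}(x)(C_\diamond(\epsilon))=1$, $\mathbf{tr}(x)(C_\diamond(au))=\int\mathbf{tr}(x')(C_\diamond(u))\,d\mathbf P_a(x,x')$. It is known (from the paper) that each $\mathbf{tr}(x)$ is a $\sigma$-finite pre-measure with a unique extension that is a sub-probability (resp. probability for $\omega,\infty$) measure. *)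

theory Defs
  imports "HOL-Probability.Probability" "HOL-Library.Sublist"
begin

datatype pts_type = T0 | TStar | TOmega | TInf

definition terminating :: "pts_type \<Rightarrow> bool" where
  "terminating d \<longleftrightarrow> d = TStar \<or> d = TInf"

definition infinite_runs :: "pts_type \<Rightarrow> bool" where
  "infinite_runs d \<longleftrightarrow> d = TOmega \<or> d = TInf"

text \<open>Sub-probability measures on Y, with the sigma-algebra generated by the evaluation
  maps (the Giry-style construction of the library, but without the library's requirement
  that the underlying space be nonempty, so that S(empty) = {0} as in the paper).\<close>
definition sub_prob_algebra :: "'b measure \<Rightarrow> 'b measure measure" where
  "sub_prob_algebra K =
    (SUP A \<in> sets K. vimage_algebra {N. sets N = sets K \<and> emeasure N (space N) \<le> 1}
        (\<lambda>N. emeasure N A) borel)"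

definition T_alg :: "pts_type \<Rightarrow> 'b measure \<Rightarrow> 'b measure measure" where
  "T_alg d K = (if infinite_runs d then prob_algebra K else sub_prob_algebra K)"

text \<open>A x X (+ 1): the element of 1 is encoded as None, (a,x) as Some (a,x).
  The alphabet carries the discrete sigma-algebra.\<close>
definition succ_space :: "pts_type \<Rightarrow> 'a set \<Rightarrow> 'x measure \<Rightarrow> ('a \<times> 'x) option measure" where
  "succ_space d A M =
     (let N = count_space A \<Otimes>\<^sub>M M in
      if terminating d
      then sigma (insert None (Some ` space N)) (insert {None} ((`) Some ` sets N))
      else sigma (Some ` space N) ((`) Some ` sets N))"

definition trans_meas :: "'x measure \<Rightarrow> ('x \<Rightarrow> ('a \<times> 'x) option measure) \<Rightarrow> 'a \<Rightarrow> 'x \<Rightarrow> 'x measure" where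
  "trans_meas M \<alpha> a x = measure_of (space M) (sets M) (\<lambda>S. emeasure (\<alpha> x) (Some ` ({a} \<times> S)))"

type_synonym 'a word = "'a list + (nat \<Rightarrow> 'a)"

definition words :: "pts_type \<Rightarrow> 'a set \<Rightarrow> 'a word set" where
  "words d A =
     (if terminating d then Inl ` lists A else {}) \<union>
     (if infinite_runs d then Inr ` {f. \<forall>n. f n \<in> A} else {})"

fun word_prefix :: "'a list \<Rightarrow> 'a word \<Rightarrow> bool" where
  "word_prefix u (Inl w) \<longleftrightarrow> prefix u w"
| "word_prefix u (Inr f) \<longleftrightarrow> u = map f [0..<length u]"

definition cyl :: "pts_type \<Rightarrow> 'a set \<Rightarrow> 'a list \<Rightarrow> 'a word set" where
  "cyl d A u = {v \<in> words d A. word_prefix u v}"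

definition gens :: "pts_type \<Rightarrow> 'a set \<Rightarrow> 'a word set set" where
  "gens d A =
     {{}} \<union>
     (if terminating d then {{Inl u} | u. u \<in> lists A} else {}) \<union>
     (if infinite_runs d then {cyl d A u | u. u \<in> lists A} else {})"

definition trace_space :: "pts_type \<Rightarrow> 'a set \<Rightarrow> 'a word measure" where
  "trace_space d A = sigma (words d A) (gens d A)"

text \<open>Trace pre-measure on singletons {u} (types * and infinity).\<close>
primrec tr_single :: "'x measure \<Rightarrow> ('x \<Rightarrow> ('a \<times> 'x) option measure) \<Rightarrow> 'a list \<Rightarrow> 'x \<Rightarrow> ennreal" where
  "tr_single M \<alpha> [] x = emeasure (\<alpha> x) {None}"
| "tr_single M \<alpha> (a # u) x = (\<integral>\<^sup>+ x'. tr_single M \<alpha> u x' \<partial>(trans_meas M \<alpha> a x))"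

text \<open>Trace pre-measure on cylinders C(u) (types omega and infinity).\<close>
primrec tr_cyl :: "'x measure \<Rightarrow> ('x \<Rightarrow> ('a \<times> 'x) option measure) \<Rightarrow> 'a list \<Rightarrow> 'x \<Rightarrow> ennreal" where
  "tr_cyl M \<alpha> [] x = 1"
| "tr_cyl M \<alpha> (a # u) x = (\<integral>\<^sup>+ x'. tr_cyl M \<alpha> u x' \<partial>(trans_meas M \<alpha> a x))"

definition is_trace_extension ::
  "pts_type \<Rightarrow> 'a set \<Rightarrow> 'x measure \<Rightarrow> ('x \<Rightarrow> ('a \<times> 'x) option measure) \<Rightarrow> 'x \<Rightarrow> 'a word measure \<Rightarrow> bool" where
  "is_trace_extension d A M \<alpha> x \<mu> \<longleftrightarrow>
     sets \<mu> = sets (trace_space d A) \<and>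
     emeasure \<mu> {} = 0 \<and>
     (terminating d \<longrightarrow> (\<forall>u \<in> lists A. emeasure \<mu> {Inl u} = tr_single M \<alpha> u x)) \<and>
     (infinite_runs d \<longrightarrow> (\<forall>u \<in> lists A. emeasure \<mu> (cyl d A u) = tr_cyl M \<alpha> u x))"

end

theory Submission imports Defs begin

lemma space_sub_prob_algebra:
  "space (sub_prob_algebra K) = {N. sets N = sets K \<and> emeasure N (space N) \<le> 1}"
  by (auto simp add: sub_prob_algebra_def space_Sup_eq_UN)

lemma measurable_emeasure_sub_prob_algebra:
  "a \<in> sets K \<Longrightarrow> (\<lambda>N. emeasure N a) \<in> borel_measurable (sub_prob_algebra K)"
  by (auto intro!: measurable_Sup1 measurable_vimage_algebra1 simp: sub_prob_algebra_def)

lemma measurable_sub_prob_algebra: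
  "(\<And>a. a \<in> space M \<Longrightarrow> emeasure (K a) (space (K a)) \<le> 1) \<Longrightarrow>
  (\<And>a. a \<in> space M \<Longrightarrow> sets (K a) = sets N) \<Longrightarrow>
  (\<And>A. A \<in> sets N \<Longrightarrow> (\<lambda>a. emeasure (K a) A) \<in> borel_measurable M) \<Longrightarrow>
  K \<in> measurable M (sub_prob_algebra N)"
  by (auto intro!: measurable_Sup2 measurable_vimage_algebra2 simp: sub_prob_algebra_def)

lemma T_alg_space:
  assumes "N \<in> space (T_alg d K)"
  shows "sets N = sets K \<and> emeasure N (space N) \<le> 1"
  using assms by (auto simp: T_alg_def space_prob_algebra space_sub_prob_algebra split: if_splits
     dest: prob_space.emeasure_space_1)

lemma T_alg_meas:
  assumes "f \<in> M \<rightarrow>\<^sub>M T_alg d K" "B \<in> sets K"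
  shows "(\<lambda>x. emeasure (f x) B) \<in> borel_measurable M"
proof (cases "infinite_runs d")
  case True
  then have "f \<in> M \<rightarrow>\<^sub>M subprob_algebra K" using assms by (simp add: T_alg_def measurable_prob_algebraD)
  then show ?thesis using assms(2) by (rule measurable_emeasure_kernel)
next
  case False
  then have "f \<in> M \<rightarrow>\<^sub>M sub_prob_algebra K" using assms by (simp add: T_alg_def)
  then show ?thesis using measurable_emeasure_sub_prob_algebra[OF assms(2)] by (rule measurable_compose)
qed

lemma img_pow: "(`) Some ` sets N \<subseteq> Pow (Some ` space N)"
proof
  fix X assume "X \<in> (`) Some ` sets N"
  then obtain Y where Y: "Y \<in> sets N" "X = Some ` Y" by blast
  have "Y \<subseteq> space N" using Y(1) by (rule sets.sets_into_space)
  then show "X \<in> Pow (Some ` space N)" using Y(2) by blast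
qed

lemma sigma_basic: "G \<subseteq> Pow \<Omega> \<Longrightarrow> B \<in> G \<Longrightarrow> B \<in> sets (sigma \<Omega> G)"
  by (simp add: sets_measure_of sigma_sets.Basic)

lemma succ_sets:
  assumes "a \<in> A" "S \<in> sets M"
  shows "Some ` ({a} \<times> S) \<in> sets (succ_space d A M)"
proof -
  define N where "N = count_space A \<Otimes>\<^sub>M M"
  have 1: "{a} \<times> S \<in> sets N" using assms unfolding N_def by (intro pair_measureI) auto
  have 2: "(`) Some ` sets N \<subseteq> Pow (Some ` space N)" by (rule img_pow)
  show ?thesis
  proof (cases "terminating d")
    case True
    have "insert {None} ((`) Some ` sets N) \<subseteq> Pow (insert None (Some ` space N))" using 2 by blast
    moreover have "Some ` ({a} \<times> S) \<in> insert {None} ((`) Some ` sets N)" using 1 by blast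
    ultimately show ?thesis using True unfolding succ_space_def Let_def N_def[symmetric]
      by (simp add: sigma_basic)
  next
    case False
    have "Some ` ({a} \<times> S) \<in> ((`) Some ` sets N)" using 1 by blast
    then show ?thesis using False 2 unfolding succ_space_def Let_def N_def[symmetric]
      by (simp add: sigma_basic)
  qed
qed

lemma succ_None:
  assumes "terminating d"
  shows "{None} \<in> sets (succ_space d A M)"
proof -
  define N where "N = count_space A \<Otimes>\<^sub>M M"
  have 2: "(`) Some ` sets N \<subseteq> Pow (Some ` space N)" by (rule img_pow)
  have "insert {None} ((`) Some ` sets N) \<subseteq> Pow (insert None (Some ` space N))" using 2 by blast
  then show ?thesis using assms unfolding succ_space_def Let_def N_def[symmetric]
    by (simp add: sigma_basic)
qed


definition L :: "'a set \<Rightarrow> nat \<Rightarrow> 'a list set" where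
  "L A n = {u. set u \<subseteq> A \<and> length u \<le> n}"

lemma L_Suc_sum:
  assumes finA: "finite A"
  shows "(\<Sum>u\<in>L A (Suc n). f u) = f [] + (\<Sum>a\<in>A. \<Sum>u\<in>L A n. f (a#u))"
proof -
  have eq: "L A (Suc n) = insert [] (\<Union>a\<in>A. (#) a ` L A n)"
  proof (intro equalityI subsetI)
    fix u assume "u \<in> L A (Suc n)"
    then show "u \<in> insert [] (\<Union>a\<in>A. (#) a ` L A n)"
      by (cases u) (auto simp: L_def)
  qed (auto simp: L_def)
  have fin: "\<And>a. finite ((#) a ` L A n)" using finite_lists_length_le[OF finA] by (simp add: L_def)
  have "(\<Sum>u\<in>L A (Suc n). f u) = f [] + (\<Sum>u\<in>(\<Union>a\<in>A. (#) a ` L A n). f u)"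
    unfolding eq by (subst sum.insert) (auto simp: fin finA)
  also have "(\<Sum>u\<in>(\<Union>a\<in>A. (#) a ` L A n). f u) = (\<Sum>a\<in>A. \<Sum>u\<in>(#) a ` L A n. f u)"
    by (rule sum.UNION_disjoint) (auto simp: finA fin)
  also have "\<dots> = (\<Sum>a\<in>A. \<Sum>u\<in>L A n. f (a#u))"
    by (rule sum.cong[OF refl], subst sum.reindex) (auto simp: inj_on_def)
  finally show ?thesis .
qed

lemma sets_trans[simp]: "sets (trans_meas M \<alpha> a x) = sets M"
  unfolding trans_meas_def by (simp add: sets.space_closed)

lemma space_trans[simp]: "space (trans_meas M \<alpha> a x) = space M"
  unfolding trans_meas_def by (simp add: sets.space_closed)

lemma meas_trans: assumes "f \<in> borel_measurable M" shows "f \<in> borel_measurable (trans_meas M \<alpha> a x)"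
proof -
  have "borel_measurable (trans_meas M \<alpha> a x) = borel_measurable M"
    by (rule measurable_cong_sets) auto
  then show ?thesis using assms by blast
qed

locale pts =
  fixes d :: pts_type and A :: "'a set" and M :: "'x measure"
    and \<alpha> :: "'x \<Rightarrow> ('a \<times> 'x) option measure"
  assumes finA: "finite A" and alpha: "\<alpha> \<in> M \<rightarrow>\<^sub>M T_alg d (succ_space d A M)"
begin

lemma alpha_x: "x \<in> space M \<Longrightarrow> sets (\<alpha> x) = sets (succ_space d A M) \<and> emeasure (\<alpha> x) (space (\<alpha> x)) \<le> 1"
  using T_alg_space[OF measurable_space[OF alpha]] .

lemma trans_emeasure:
  assumes a: "a \<in> A" and x: "x \<in> space M" and S: "S \<in> sets M"
  shows "emeasure (trans_meas M \<alpha> a x) S = emeasure (\<alpha> x) (Some ` ({a} \<times> S))"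
  unfolding trans_meas_def
proof (rule emeasure_measure_of_sigma[OF sets.sigma_algebra_axioms _ _ S])
  show "positive (sets M) (\<lambda>S. emeasure (\<alpha> x) (Some ` ({a} \<times> S)))"
    by (simp add: positive_def)
  show "countably_additive (sets M) (\<lambda>S. emeasure (\<alpha> x) (Some ` ({a} \<times> S)))"
    unfolding countably_additive_def
  proof (intro allI impI)
    fix F :: "nat \<Rightarrow> _" assume F: "range F \<subseteq> sets M" "disjoint_family F" "\<Union> (range F) \<in> sets M"
    have eq: "Some ` ({a} \<times> \<Union> (range F)) = (\<Union>i. Some ` ({a} \<times> F i))" by auto
    have "range (\<lambda>i. Some ` ({a} \<times> F i)) \<subseteq> sets (\<alpha> x)"
      using F(1) alpha_x[OF x] succ_sets[OF a] by auto
    moreover have "disjoint_family (\<lambda>i. Some ` ({a} \<times> F i))"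
      using F(2) by (auto simp: disjoint_family_on_def)
    ultimately show "(\<Sum>i. emeasure (\<alpha> x) (Some ` ({a} \<times> F i))) = emeasure (\<alpha> x) (Some ` ({a} \<times> \<Union> (range F)))"
      unfolding eq by (rule suminf_emeasure)
  qed
qed

lemma trans_space_le:
  assumes a: "a \<in> A" and x: "x \<in> space M"
  shows "emeasure (trans_meas M \<alpha> a x) (space M) = emeasure (\<alpha> x) (Some ` ({a} \<times> space M))"
  using trans_emeasure[OF a x sets.top] .

lemma trans_kernel: assumes a: "a \<in> A" shows "trans_meas M \<alpha> a \<in> M \<rightarrow>\<^sub>M subprob_algebra M"
proof (rule measurable_subprob_algebra)
  fix x assume x: "x \<in> space M"
  have "emeasure (trans_meas M \<alpha> a x) (space M) = emeasure (\<alpha> x) (Some ` ({a} \<times> space M))"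
    using trans_space_le[OF a x] .
  also have "\<dots> \<le> emeasure (\<alpha> x) (space (\<alpha> x))" by (rule emeasure_space)
  also have "\<dots> \<le> 1" using alpha_x[OF x] by simp
  finally show "subprob_space (trans_meas M \<alpha> a x)" using x by (intro subprob_spaceI) auto
next
  fix U assume U: "U \<in> sets M"
  have "(\<lambda>x. emeasure (\<alpha> x) (Some ` ({a} \<times> U))) \<in> borel_measurable M"
    by (rule T_alg_meas[OF alpha succ_sets[OF a U]])
  then show "(\<lambda>x. emeasure (trans_meas M \<alpha> a x) U) \<in> borel_measurable M"
    by (rule measurable_cong[THEN iffD1, rotated]) (simp add: trans_emeasure[OF a _ U])
qed simp

lemma tr_single_meas: "terminating d \<Longrightarrow> u \<in> lists A \<Longrightarrow> (\<lambda>x. tr_single M \<alpha> u x) \<in> borel_measurable M"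
proof (induction u)
  case Nil
  then show ?case using T_alg_meas[OF alpha succ_None] by simp
next
  case (Cons a u)
  then have IH: "(\<lambda>x. tr_single M \<alpha> u x) \<in> borel_measurable M" and a: "a \<in> A" by auto
  have "(\<lambda>(x,y). tr_single M \<alpha> u y) \<in> borel_measurable (M \<Otimes>\<^sub>M M)" using IH by measurable
  from nn_integral_measurable_subprob_algebra2[OF this trans_kernel[OF a]]
  show ?case by simp
qed

lemma tr_cyl_meas: "u \<in> lists A \<Longrightarrow> (\<lambda>x. tr_cyl M \<alpha> u x) \<in> borel_measurable M"
proof (induction u)
  case Nil
  then show ?case by simp
next
  case (Cons a u)
  then have IH: "(\<lambda>x. tr_cyl M \<alpha> u x) \<in> borel_measurable M" and a: "a \<in> A" by auto
  have "(\<lambda>(x,y). tr_cyl M \<alpha> u y) \<in> borel_measurable (M \<Otimes>\<^sub>M M)" using IH by measurable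
  from nn_integral_measurable_subprob_algebra2[OF this trans_kernel[OF a]]
  show ?case by simp
qed


lemma tr_single_bound: "terminating d \<Longrightarrow> x \<in> space M \<Longrightarrow> (\<Sum>u\<in>L A n. tr_single M \<alpha> u x) \<le> 1"
proof (induction n arbitrary: x)
  case 0
  have "L A 0 = {[]}" by (auto simp: L_def)
  then have "(\<Sum>u\<in>L A 0. tr_single M \<alpha> u x) = emeasure (\<alpha> x) {None}" by simp
  also have "\<dots> \<le> emeasure (\<alpha> x) (space (\<alpha> x))" by (rule emeasure_space)
  also have "\<dots> \<le> 1" using alpha_x[OF 0(2)] by simp
  finally show ?case .
next
  case (Suc n)
  note trm = Suc.prems(1) and x = Suc.prems(2)
  have Lsub: "L A n \<subseteq> lists A" by (auto simp: L_def)
  have "(\<Sum>u\<in>L A (Suc n). tr_single M \<alpha> u x) = emeasure (\<alpha> x) {None} + (\<Sum>a\<in>A. \<Sum>u\<in>L A n. \<integral>\<^sup>+y. tr_single M \<alpha> u y \<partial>trans_meas M \<alpha> a x)"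
    by (simp add: L_Suc_sum[OF finA])
  also have "\<dots> = emeasure (\<alpha> x) {None} + (\<Sum>a\<in>A. \<integral>\<^sup>+y. (\<Sum>u\<in>L A n. tr_single M \<alpha> u y) \<partial>trans_meas M \<alpha> a x)"
  proof -
    have "\<And>a. (\<Sum>u\<in>L A n. \<integral>\<^sup>+y. tr_single M \<alpha> u y \<partial>trans_meas M \<alpha> a x) = (\<integral>\<^sup>+y. (\<Sum>u\<in>L A n. tr_single M \<alpha> u y) \<partial>trans_meas M \<alpha> a x)"
      by (rule nn_integral_sum[symmetric]) (intro meas_trans tr_single_meas[OF trm], use Lsub in blast)
    then show ?thesis by simp
  qed
  also have "\<dots> \<le> emeasure (\<alpha> x) {None} + (\<Sum>a\<in>A. emeasure (\<alpha> x) (Some ` ({a} \<times> space M)))"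
  proof (intro add_left_mono sum_mono)
    fix a assume a: "a \<in> A"
    have "(\<integral>\<^sup>+y. (\<Sum>u\<in>L A n. tr_single M \<alpha> u y) \<partial>trans_meas M \<alpha> a x) \<le> (\<integral>\<^sup>+y. 1 \<partial>trans_meas M \<alpha> a x)"
      by (rule nn_integral_mono) (use Suc.IH[OF trm] in simp)
    also have "\<dots> = emeasure (trans_meas M \<alpha> a x) (space M)" by simp
    also have "\<dots> = emeasure (\<alpha> x) (Some ` ({a} \<times> space M))" by (rule trans_space_le[OF a x])
    finally show "(\<integral>\<^sup>+y. (\<Sum>u\<in>L A n. tr_single M \<alpha> u y) \<partial>trans_meas M \<alpha> a x) \<le> emeasure (\<alpha> x) (Some ` ({a} \<times> space M))" .
  qed
  also have "\<dots> = emeasure (\<alpha> x) ({None} \<union> (\<Union>a\<in>A. Some ` ({a} \<times> space M)))"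
  proof -
    have S: "\<And>a. a \<in> A \<Longrightarrow> Some ` ({a} \<times> space M) \<in> sets (\<alpha> x)"
      using alpha_x[OF x] succ_sets[OF _ sets.top] by auto
    have "(\<Sum>a\<in>A. emeasure (\<alpha> x) (Some ` ({a} \<times> space M))) = emeasure (\<alpha> x) (\<Union>a\<in>A. Some ` ({a} \<times> space M))"
      by (rule sum_emeasure) (use S finA in \<open>auto simp: disjoint_family_on_def\<close>)
    moreover have "(\<Union>a\<in>A. Some ` ({a} \<times> space M)) \<in> sets (\<alpha> x)" using S finA by auto
    moreover have "{None} \<in> sets (\<alpha> x)" using alpha_x[OF x] succ_None[OF trm] by simp
    moreover have "{None} \<inter> (\<Union>a\<in>A. Some ` ({a} \<times> space M)) = {}" by auto
    ultimately show ?thesis by (simp add: plus_emeasure)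
  qed
  also have "\<dots> \<le> emeasure (\<alpha> x) (space (\<alpha> x))" by (rule emeasure_space)
  also have "\<dots> \<le> 1" using alpha_x[OF x] by simp
  finally show ?case .
qed

end

lemma wp_Nil[simp]: "word_prefix [] w"
  by (cases w) auto

lemma wp_mono: "word_prefix u w \<Longrightarrow> prefix v u \<Longrightarrow> word_prefix v w"
proof (cases w)
  case (Inl x)
  then show "word_prefix u w \<Longrightarrow> prefix v u \<Longrightarrow> word_prefix v w" by (auto intro: prefix_order.trans)
next
  case (Inr f)
  assume u: "word_prefix u w" and vu: "prefix v u"
  from vu obtain z where z: "u = v @ z" by (auto simp: prefix_def)
  have uf: "u = map f [0..<length u]" using u Inr by simp
  have "v = take (length v) u" using z by simp
  also have "\<dots> = map f [0..<length v]" using uf z by (metis take_map take_upt add_0 le_add1 length_append)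
  finally show "word_prefix v w" using Inr by simp
qed

lemma wp_comparable: "word_prefix u w \<Longrightarrow> word_prefix v w \<Longrightarrow> prefix u v \<or> prefix v u"
proof (cases w)
  case (Inl x)
  then show "word_prefix u w \<Longrightarrow> word_prefix v w \<Longrightarrow> prefix u v \<or> prefix v u"
    using prefix_same_cases by auto
next
  case (Inr f)
  assume u: "word_prefix u w" and v: "word_prefix v w"
  have uf: "u = map f [0..<length u]" and vf: "v = map f [0..<length v]" using u v Inr by auto
  have gen: "\<And>m n. m \<le> n \<Longrightarrow> prefix (map f [0..<m]) (map f [0..<n])"
  proof -
    fix m n :: nat assume "m \<le> n"
    then obtain k where "n = m + k" using le_Suc_ex by blast
    then have "[0..<n] = [0..<m] @ [m..<n]" using upt_add_eq_append[of 0 m k] by simp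
    then show "prefix (map f [0..<m]) (map f [0..<n])" by (simp add: prefix_def)
  qed
  show "prefix u v \<or> prefix v u"
  proof (cases "length u \<le> length v")
    case True then show ?thesis using gen[OF True] uf vf by metis
  next
    case False then have "length v \<le> length u" by simp
    then show ?thesis using gen uf vf by metis
  qed
qed

lemma gens_cases:
  assumes "B \<in> gens d A"
  shows "B = {} \<or> (terminating d \<and> (\<exists>u\<in>lists A. B = {Inl u})) \<or> (infinite_runs d \<and> (\<exists>u\<in>lists A. B = cyl d A u))"
  using assms by (auto simp: gens_def split: if_splits)

lemma gens_pow: "gens d A \<subseteq> Pow (words d A)"
proof
  fix B assume "B \<in> gens d A"
  then show "B \<in> Pow (words d A)"
    using gens_cases[of B d A] by (auto simp: words_def cyl_def)
qed

lemma sets_trace: "sets (trace_space d A) = sigma_sets (words d A) (gens d A)"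
  unfolding trace_space_def using gens_pow by (rule sets_measure_of)

lemma space_trace: "space (trace_space d A) = words d A"
  unfolding trace_space_def using gens_pow by (rule space_measure_of)

lemma Int_stable_gens: "Int_stable (gens d A)"
  unfolding Int_stable_def
proof (intro ballI)
  fix a b assume a: "a \<in> gens d A" and b: "b \<in> gens d A"
  have cc: "cyl d A u \<inter> cyl d A v \<in> gens d A" if uv: "u \<in> lists A" "v \<in> lists A" "infinite_runs d" for u v
  proof -
    consider "prefix u v" | "prefix v u" | "\<not> prefix u v \<and> \<not> prefix v u" by blast
    then show ?thesis
    proof cases
      case 1
      then have "cyl d A u \<inter> cyl d A v = cyl d A v" by (auto simp: cyl_def dest: wp_mono)
      then show ?thesis using uv by (auto simp: gens_def)
    next
      case 2
      then have "cyl d A u \<inter> cyl d A v = cyl d A u" by (auto simp: cyl_def dest: wp_mono)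
      then show ?thesis using uv by (auto simp: gens_def)
    next
      case 3
      then have "cyl d A u \<inter> cyl d A v = {}" by (auto simp: cyl_def dest: wp_comparable)
      then show ?thesis by (auto simp: gens_def)
    qed
  qed
  have sc1: "{Inl u} \<inter> B \<in> gens d A" if "{Inl u} \<in> gens d A" for u B
  proof (cases "Inl u \<in> B")
    case True then have "{Inl u} \<inter> B = {Inl u}" by auto
    then show ?thesis using that by simp
  next
    case False then have "{Inl u} \<inter> B = {}" by auto
    then show ?thesis by (simp add: gens_def)
  qed
  have sc2: "B \<inter> {Inl u} \<in> gens d A" if "{Inl u} \<in> gens d A" for u B
    using sc1[OF that, of B] by (simp add: Int_commute)
  from gens_cases[OF a] consider (e) "a = {}" | (s) u where "terminating d" "u \<in> lists A" "a = {Inl u}"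
    | (c) u where "infinite_runs d" "u \<in> lists A" "a = cyl d A u" by blast
  then show "a \<inter> b \<in> gens d A"
  proof cases
    case e then show ?thesis by (simp add: gens_def)
  next
    case s then show ?thesis using sc1[of u b] a by simp
  next
    case c
    from gens_cases[OF b] consider (e') "b = {}" | (s') v where "terminating d" "v \<in> lists A" "b = {Inl v}"
      | (c') v where "infinite_runs d" "v \<in> lists A" "b = cyl d A v" by blast
    then show ?thesis
    proof cases
      case e' then show ?thesis by (simp add: gens_def)
    next
      case s' then show ?thesis using sc2[of v a] b by simp
    next
      case c' then show ?thesis using cc[of u v] c by simp
    qed
  qed
qed

locale pts_tr = pts +
  fixes tr :: "'x \<Rightarrow> 'a word measure"
  assumes ext: "\<forall>x \<in> space M. is_trace_extension d A M \<alpha> x (tr x)"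
begin

lemma sets_tr: "x \<in> space M \<Longrightarrow> sets (tr x) = sets (trace_space d A)"
  using ext by (auto simp: is_trace_extension_def)

lemma sets_tr2: "x \<in> space M \<Longrightarrow> sets (tr x) = sigma_sets (words d A) (gens d A)"
  using sets_tr[of x] sets_trace[of d A] by (simp only:)

lemma space_tr: "x \<in> space M \<Longrightarrow> space (tr x) = words d A"
  using sets_eq_imp_space_eq[OF sets_tr] space_trace by simp

lemma tr_single_val: "x \<in> space M \<Longrightarrow> terminating d \<Longrightarrow> u \<in> lists A \<Longrightarrow> emeasure (tr x) {Inl u} = tr_single M \<alpha> u x"
  using ext by (auto simp: is_trace_extension_def)

lemma tr_cyl_val: "x \<in> space M \<Longrightarrow> infinite_runs d \<Longrightarrow> u \<in> lists A \<Longrightarrow> emeasure (tr x) (cyl d A u) = tr_cyl M \<alpha> u x"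
  using ext by (auto simp: is_trace_extension_def)

lemma gens_sets: "x \<in> space M \<Longrightarrow> B \<in> gens d A \<Longrightarrow> B \<in> sets (tr x)"
  by (simp add: sets_tr sets_trace sigma_sets.Basic)

lemma words_cyl: "words d A = cyl d A []"
  by (auto simp: cyl_def)

lemma omega:
  "(\<forall>x\<in>space M. emeasure (tr x) (words d A) \<le> 1) \<and> (\<lambda>x. emeasure (tr x) (words d A)) \<in> borel_measurable M"
proof (cases "infinite_runs d")
  case True
  have "\<And>x. x \<in> space M \<Longrightarrow> emeasure (tr x) (words d A) = 1"
    using tr_cyl_val[OF _ True, of _ "[]"] words_cyl by simp
  note one = this
  have "(\<lambda>x. emeasure (tr x) (words d A)) \<in> borel_measurable M"
    by (rule measurable_cong[of M "\<lambda>_. (1::ennreal)", THEN iffD1]) (simp_all add: one)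
  with one show ?thesis by simp
next
  case False
  show ?thesis
  proof (cases "terminating d")
    case False
    with \<open>\<not> infinite_runs d\<close> have "words d A = {}" by (simp add: words_def)
    then show ?thesis by simp
  next
    case True
    have W0: "words d A = Inl ` lists A" using False True by (simp add: words_def)
    have W1: "lists A = (\<Union>n. L A n)"
    proof (intro equalityI subsetI)
      fix u assume "u \<in> lists A"
      then have "u \<in> L A (length u)" by (auto simp: L_def)
      then show "u \<in> (\<Union>n. L A n)" by blast
    qed (auto simp: L_def)
    have W: "words d A = (\<Union>n. Inl ` L A n)" unfolding W0 W1 by (rule image_UN)
    have fin: "finite (L A n)" for n using finite_lists_length_le[OF finA] by (simp add: L_def)
    have Lsub: "L A n \<subseteq> lists A" for n by (auto simp: L_def)
    have eq: "emeasure (tr x) (words d A) = (SUP n. \<Sum>u\<in>L A n. tr_single M \<alpha> u x)" if x: "x \<in> space M" for x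
    proof -
      have sing: "{Inl u} \<in> sets (tr x)" if "u \<in> lists A" for u
        using gens_sets[OF x] that True by (auto simp: gens_def)
      have rs: "Inl ` L A n \<in> sets (tr x)" for n
        by (rule sets.countable) (use sing Lsub fin in \<open>auto intro: countable_finite\<close>)
      have inc: "incseq (\<lambda>n. Inl ` L A n)" by (auto simp: incseq_def L_def)
      have "emeasure (tr x) (words d A) = (SUP n. emeasure (tr x) (Inl ` L A n))"
        unfolding W by (rule SUP_emeasure_incseq[symmetric]) (use rs inc in auto)
      also have "\<dots> = (SUP n. \<Sum>u\<in>L A n. tr_single M \<alpha> u x)"
      proof (rule SUP_cong[OF refl])
        fix n
        have "emeasure (tr x) (Inl ` L A n) = (\<Sum>w\<in>Inl ` L A n. emeasure (tr x) {w})"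
          by (rule emeasure_eq_sum_singleton) (use fin sing Lsub in blast)+
        also have "\<dots> = (\<Sum>u\<in>L A n. emeasure (tr x) {Inl u})" by (simp add: sum.reindex)
        also have "\<dots> = (\<Sum>u\<in>L A n. tr_single M \<alpha> u x)"
          using tr_single_val[OF x True] Lsub by (intro sum.cong) auto
        finally show "emeasure (tr x) (Inl ` L A n) = (\<Sum>u\<in>L A n. tr_single M \<alpha> u x)" .
      qed
      finally show ?thesis .
    qed
    have "(\<lambda>x. SUP n. \<Sum>u\<in>L A n. tr_single M \<alpha> u x) \<in> borel_measurable M"
      using tr_single_meas[OF True] Lsub by (intro borel_measurable_SUP borel_measurable_sum) auto
    then have m: "(\<lambda>x. emeasure (tr x) (words d A)) \<in> borel_measurable M"
      by (rule measurable_cong[THEN iffD1, rotated]) (simp add: eq)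
    have "\<forall>x\<in>space M. emeasure (tr x) (words d A) \<le> 1"
      using eq tr_single_bound[OF True] by (auto intro!: SUP_least)
    with m show ?thesis by simp
  qed
qed

lemma emeasure_meas:
  assumes S: "S \<in> sets (trace_space d A)"
  shows "(\<lambda>x. emeasure (tr x) S) \<in> borel_measurable M"
proof -
  have "S \<in> sigma_sets (words d A) (gens d A)" using S sets_trace[of d A] by (simp only:)
  with Int_stable_gens gens_pow show ?thesis
  proof (induction rule: sigma_sets_induct_disjoint)
    case (basic B)
    then consider "B = {}" | u where "terminating d" "u \<in> lists A" "B = {Inl u}"
      | u where "infinite_runs d" "u \<in> lists A" "B = cyl d A u"
      using gens_cases by blast
    then show ?case
    proof cases
      case 1 then show ?thesis by simp
    next
      case 2
      then show ?thesis using tr_single_meas[OF 2(1,2)]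
        by (rule_tac measurable_cong[THEN iffD1, rotated]) (auto simp: tr_single_val)
    next
      case 3
      then show ?thesis using tr_cyl_meas[OF 3(2)]
        by (rule_tac measurable_cong[THEN iffD1, rotated]) (auto simp: tr_cyl_val)
    qed
  next
    case empty
    then show ?case by simp
  next
    case (compl B)
    have eq: "emeasure (tr x) (words d A - B) = emeasure (tr x) (words d A) - emeasure (tr x) B"
      if x: "x \<in> space M" for x
    proof -
      have B: "B \<in> sets (tr x)" using compl(1) sets_tr2[OF x] by simp
      have "emeasure (tr x) B \<le> emeasure (tr x) (space (tr x))" by (rule emeasure_space)
      also have "\<dots> \<le> 1" using omega x space_tr[OF x] by simp
      finally have "emeasure (tr x) B \<noteq> \<infinity>" by (auto simp: top_unique)
      from emeasure_compl[OF B this] show ?thesis using space_tr[OF x] by simp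
    qed
    have "(\<lambda>x. emeasure (tr x) (words d A) - emeasure (tr x) B) \<in> borel_measurable M"
      using omega compl(2) by (intro borel_measurable_minus_ennreal) auto
    then show ?case
      by (rule measurable_cong[THEN iffD1, rotated]) (simp add: eq)
  next
    case (union F)
    have eq: "emeasure (tr x) (\<Union>i. F i) = (\<Sum>i. emeasure (tr x) (F i))" if x: "x \<in> space M" for x
      using union(1,2) sets_tr2[OF x] by (intro suminf_emeasure[symmetric]) auto
    have "(\<lambda>x. \<Sum>i. emeasure (tr x) (F i)) \<in> borel_measurable M"
      using union(3) by (intro borel_measurable_suminf_order) auto
    then show ?case
      by (rule measurable_cong[THEN iffD1, rotated]) (simp add: eq)
  qed
qed

end

theorem mainTheorem7:
  fixes d :: pts_type and A :: "'a set" and M :: "'x measure"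
    and \<alpha> :: "'x \<Rightarrow> ('a \<times> 'x) option measure"
    and tr :: "'x \<Rightarrow> 'a word measure"
  assumes "finite A"
    and "\<alpha> \<in> M \<rightarrow>\<^sub>M T_alg d (succ_space d A M)"
    and "\<forall>x \<in> space M. is_trace_extension d A M \<alpha> x (tr x)"
  shows "(\<forall>S \<in> sets (trace_space d A). (\<lambda>x. measure (tr x) S) \<in> borel_measurable M)
         \<and> tr \<in> M \<rightarrow>\<^sub>M T_alg d (trace_space d A)"
proof -
  interpret pts_tr d A M \<alpha> tr using assms by unfold_locales auto
  have E: "\<And>S. S \<in> sets (trace_space d A) \<Longrightarrow> (\<lambda>x. emeasure (tr x) S) \<in> borel_measurable M"
    by (rule emeasure_meas)
  have 1: "\<forall>S \<in> sets (trace_space d A). (\<lambda>x. measure (tr x) S) \<in> borel_measurable M"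
    unfolding measure_def using E by (auto intro: borel_measurable_enn2real)
  have 2: "tr \<in> M \<rightarrow>\<^sub>M T_alg d (trace_space d A)"
  proof (cases "infinite_runs d")
    case True
    have P: "prob_space (tr x)" if x: "x \<in> space M" for x
    proof (rule prob_spaceI)
      show "emeasure (tr x) (space (tr x)) = 1"
        using tr_cyl_val[OF x True, of "[]"] words_cyl space_tr[OF x] by simp
    qed
    have "tr \<in> M \<rightarrow>\<^sub>M subprob_algebra (trace_space d A)"
      by (rule measurable_subprob_algebra) (auto simp: P prob_space_imp_subprob_space sets_tr E)
    then show ?thesis unfolding T_alg_def using True P by (auto intro!: measurable_prob_algebraI)
  next
    case False
    have "tr \<in> M \<rightarrow>\<^sub>M sub_prob_algebra (trace_space d A)"
      by (rule measurable_sub_prob_algebra) (use omega space_tr sets_tr E in auto)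
    then show ?thesis unfolding T_alg_def using False by simp
  qed
  from 1 2 show ?thesis by simp
qed

end
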